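(* Let $d\ge2$, $l>0$, $\lambda\ne0$, and constants $a,b\in\mathbb R$, $b>0$, $z_0\in\mathbb R^d$. On $\mathbb H_{d+1}$ with metric $ds^2=\frac{l^2}{z^2}(dz^2+dz^idz^i)$, $z>0$, define on the set where the right-hand side is positive $$\phi^{2/(d-1)}=\frac{d-1}{l\sqrt{|\lambda|}}\,\frac{bz}{-\mathrm{sgn}(\lambda)b^2+(z+a)^2+|\vec z-\vec z_0|^2}.$$ Then $\mathcal T_{\mu\nu}=0$, $R_{\mu\nu}+\frac d{l^2}g_{\mu\nu}=0$ and $\square_g\phi-\frac{d-1}{4d}R\phi-\frac{d+1}{d-1}\lambda\phi^{\frac{d+3}{d-1}}=0$, so $(g,\phi)$ solves the equations of motion of the conformally coupled scalar. Moreover, with $z=e^{-r/l}$, as $r\to\infty$, $$\phi=e^{-\frac{(d-1)r}{2l}}\phi_-(\vec z)-l\alpha\,e^{-\frac{(d+1)r}{2l}}\phi_-(\vec z)^{\frac{d+1}{d-1}}+\dots,\qquad \alpha=\frac{\sqrt{|\lambda|}\,a}{b},\qquad \phi_-^{2/(d-1)}=\frac{d-1}{l\sqrt{|\lambda|}}\frac{b}{-\mathrm{sgn}(\lambda)b^2+a^2+|\vec z-\vec z_0|^2},$$ so that $\hat\pi_{(\Delta_+)}:=-\frac1l\phi_+=\alpha\phi_-^{\frac{d+1}{d-1}}$ and the solution satisfies the mixed boundary condition $-\hat\pi_{(\Delta_+)}-f'(\phi_-)=0$ with $f(\phi_-)=-\alpha\frac{d-1}{2d}\phi_-^{\frac{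2d}{d-1}}$.
   Context: $\mathcal T_{\mu\nu}=\frac{(d-1)^2}{4d}\frac{\phi^{2d/(d-1)}}{1-\frac{(d-1)\kappa^2}{4d}\phi^2}\big(\nabla_\mu\nabla_\nu-\frac1{d+1}g_{\mu\nu}\square_g\big)\phi^{-2/(d-1)}$. The equations of motion of the conformally coupled scalar (action $\int\sqrt g(-\frac{1}{2\kappa^2}(R+\frac{d(d-1)}{l^2})+\frac12(\partial\phi)^2+\frac{d-1}{8d}R\phi^2+\frac\lambda2\phi^{2(d+1)/(d-1)})$) are $R_{\mu\nu}+\frac d{l^2}g_{\mu\nu}=\kappa^2\mathcal T_{\mu\nu}$ and $\square_g\phi-\frac{d-1}{4d}R\phi-\frac{d+1}{d-1}\lambda\phi^{(d+3)/(d-1)}=0$. $\phi_+$ denotes the coefficient of $e^{-(d+1)r/2l}$ in the expansion. *)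

theory Defs
  imports "HOL-Analysis.Analysis" "HOL-Library.Landau_Symbols"
begin

text \<open>Coordinates are taken with respect to the standard orthonormal Basis of the
euclidean space 'a.  Tensors are indexed by basis vectors.  A metric is given by
its components g x i j and its inverse by gi x i j (both at the point x).\<close>

definition pd :: "('a::euclidean_space \<Rightarrow> real) \<Rightarrow> 'a \<Rightarrow> 'a \<Rightarrow> real" where
  "pd f e x = deriv (\<lambda>t. f (x + t *\<^sub>R e)) 0"

definition christoffel ::
  "('a::euclidean_space \<Rightarrow> 'a \<Rightarrow> 'a \<Rightarrow> real) \<Rightarrow> ('a \<Rightarrow> 'a \<Rightarrow> 'a \<Rightarrow> real)
     \<Rightarrow> 'a \<Rightarrow> 'a \<Rightarrow> 'a \<Rightarrow> 'a \<Rightarrow> real" where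
  "christoffel g gi k i j x =
     (1/2) * (\<Sum>m\<in>Basis. gi x k m *
        (pd (\<lambda>y. g y m j) i x + pd (\<lambda>y. g y m i) j x - pd (\<lambda>y. g y i j) m x))"

text \<open>Ricci tensor, convention R_ij = d_k G^k_ij - d_j G^k_ik + G^k_kp G^p_ij - G^k_jp G^p_ik
(positive on spheres, equal to -(d/l^2) g on hyperbolic (d+1)-space of radius l).\<close>
definition ricci ::
  "('a::euclidean_space \<Rightarrow> 'a \<Rightarrow> 'a \<Rightarrow> real) \<Rightarrow> ('a \<Rightarrow> 'a \<Rightarrow> 'a \<Rightarrow> real)
     \<Rightarrow> 'a \<Rightarrow> 'a \<Rightarrow> 'a \<Rightarrow> real" where
  "ricci g gi i j x =
     (\<Sum>k\<in>Basis. pd (\<lambda>y. christoffel g gi k i j y) k x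
                 - pd (\<lambda>y. christoffel g gi k i k y) j x)
   + (\<Sum>k\<in>Basis. \<Sum>p\<in>Basis.
        christoffel g gi k k p x * christoffel g gi p i j x
      - christoffel g gi k j p x * christoffel g gi p i k x)"

definition scalar_curv ::
  "('a::euclidean_space \<Rightarrow> 'a \<Rightarrow> 'a \<Rightarrow> real) \<Rightarrow> ('a \<Rightarrow> 'a \<Rightarrow> 'a \<Rightarrow> real) \<Rightarrow> 'a \<Rightarrow> real" where
  "scalar_curv g gi x = (\<Sum>i\<in>Basis. \<Sum>j\<in>Basis. gi x i j * ricci g gi i j x)"

definition hess ::
  "('a::euclidean_space \<Rightarrow> 'a \<Rightarrow> 'a \<Rightarrow> real) \<Rightarrow> ('a \<Rightarrow> 'a \<Rightarrow> 'a \<Rightarrow> real)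
     \<Rightarrow> ('a \<Rightarrow> real) \<Rightarrow> 'a \<Rightarrow> 'a \<Rightarrow> 'a \<Rightarrow> real" where
  "hess g gi f i j x = pd (\<lambda>y. pd f j y) i x - (\<Sum>k\<in>Basis. christoffel g gi k i j x * pd f k x)"

definition box ::
  "('a::euclidean_space \<Rightarrow> 'a \<Rightarrow> 'a \<Rightarrow> real) \<Rightarrow> ('a \<Rightarrow> 'a \<Rightarrow> 'a \<Rightarrow> real)
     \<Rightarrow> ('a \<Rightarrow> real) \<Rightarrow> 'a \<Rightarrow> real" where
  "box g gi f x = (\<Sum>i\<in>Basis. \<Sum>j\<in>Basis. gi x i j * hess g gi f i j x)"

text \<open>The tensor T_{mu nu} of the conformally coupled scalar (d = boundary dimension).\<close>
definition stressT ::
  "('a::euclidean_space \<Rightarrow> 'a \<Rightarrow> 'a \<Rightarrow> real) \<Rightarrow> ('a \<Rightarrow> 'a \<Rightarrow> 'a \<Rightarrow> real)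
     \<Rightarrow> real \<Rightarrow> real \<Rightarrow> ('a \<Rightarrow> real) \<Rightarrow> 'a \<Rightarrow> 'a \<Rightarrow> 'a \<Rightarrow> real" where
  "stressT g gi d \<kappa> \<phi> i j x =
     ((d - 1)^2 / (4 * d)) * (\<phi> x powr (2 * d / (d - 1)))
       / (1 - (d - 1) * \<kappa>^2 / (4 * d) * (\<phi> x)^2)
     * (hess g gi (\<lambda>y. \<phi> y powr (-2 / (d - 1))) i j x
        - (1 / (d + 1)) * g x i j * box g gi (\<lambda>y. \<phi> y powr (-2 / (d - 1))) x)"

section \<open>Hyperbolic space H_{d+1}: points (z, zvec) with z > 0\<close>

definition hyp_g :: "real \<Rightarrow> real \<times> 'b::euclidean_space \<Rightarrow> real \<times> 'b \<Rightarrow> real \<times> 'b \<Rightarrow> real" where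
  "hyp_g l x u v = l^2 / (fst x)^2 * (u \<bullet> v)"

definition hyp_gi :: "real \<Rightarrow> real \<times> 'b::euclidean_space \<Rightarrow> real \<times> 'b \<Rightarrow> real \<times> 'b \<Rightarrow> real" where
  "hyp_gi l x u v = (fst x)^2 / l^2 * (u \<bullet> v)"

definition phi_rhs :: "real \<Rightarrow> real \<Rightarrow> real \<Rightarrow> real \<Rightarrow> real \<Rightarrow> 'b::euclidean_space \<Rightarrow> real \<times> 'b \<Rightarrow> real" where
  "phi_rhs d l lam a b z0 x =
     (d - 1) / (l * sqrt \<bar>lam\<bar>) * (b * fst x)
       / (- sgn lam * b^2 + (fst x + a)^2 + (norm (snd x - z0))^2)"

definition conf_phi :: "real \<Rightarrow> real \<Rightarrow> real \<Rightarrow> real \<Rightarrow> real \<Rightarrow> 'b::euclidean_space \<Rightarrow> real \<times> 'b \<Rightarrow> real" where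
  "conf_phi d l lam a b z0 x = phi_rhs d l lam a b z0 x powr ((d - 1) / 2)"

definition sol_domain :: "real \<Rightarrow> real \<Rightarrow> real \<Rightarrow> real \<Rightarrow> real \<Rightarrow> 'b::euclidean_space \<Rightarrow> (real \<times> 'b) set" where
  "sol_domain d l lam a b z0 = {x. fst x > 0 \<and> phi_rhs d l lam a b z0 x > 0}"

definition phi_minus :: "real \<Rightarrow> real \<Rightarrow> real \<Rightarrow> real \<Rightarrow> real \<Rightarrow> 'b::euclidean_space \<Rightarrow> 'b \<Rightarrow> real" where
  "phi_minus d l lam a b z0 zv =
     ((d - 1) / (l * sqrt \<bar>lam\<bar>) * b / (- sgn lam * b^2 + a^2 + (norm (zv - z0))^2))
       powr ((d - 1) / 2)"

end

theory Submission
  imports Defs "HOL-Real_Asymp.Real_Asymp"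
begin


lemma pd_has_derivative:
  assumes "(f has_derivative f') (at x)"
  shows "pd f e x = f' e"
proof -
  have lin: "((\<lambda>t::real. x + t *\<^sub>R e) has_derivative (\<lambda>t. t *\<^sub>R e)) (at 0)"
    by (auto intro!: derivative_eq_intros)
  have f0: "(f has_derivative f') (at (x + 0 *\<^sub>R e))" using assms by simp
  have "((f \<circ> (\<lambda>t::real. x + t *\<^sub>R e)) has_derivative (f' \<circ> (\<lambda>t. t *\<^sub>R e))) (at 0)"
    by (rule diff_chain_at[OF lin f0])
  moreover have "f' \<circ> (\<lambda>t. t *\<^sub>R e) = (\<lambda>t. t * f' e)"
    using has_derivative_linear[OF assms] by (auto simp: linear_scale o_def)
  moreover have "(\<lambda>t. t * f' e) = (*) (f' e)" by (auto simp: mult.commute)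
  ultimately have "((\<lambda>t. f (x + t *\<^sub>R e)) has_field_derivative f' e) (at 0)"
    by (simp add: has_field_derivative_def o_def)
  then show ?thesis unfolding pd_def by (rule DERIV_imp_deriv)
qed

lemma pd_cong_ev:
  assumes "eventually (\<lambda>y. f y = g y) (nhds x)"
  shows "pd f e x = pd g e x"
proof -
  obtain S where S: "open S" "x \<in> S" "\<And>y. y \<in> S \<Longrightarrow> f y = g y"
    using assms unfolding eventually_nhds by blast
  have "open ((\<lambda>t::real. x + t *\<^sub>R e) -` S)"
    by (rule continuous_open_vimage[OF S(1)]) (intro continuous_intros)
  moreover have "(0::real) \<in> (\<lambda>t::real. x + t *\<^sub>R e) -` S" using S(2) by simp
  ultimately have "eventually (\<lambda>t. f (x + t *\<^sub>R e) = g (x + t *\<^sub>R e)) (nhds (0::real))"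
    unfolding eventually_nhds using S(3) by blast
  then show ?thesis unfolding pd_def by (rule deriv_cong_ev) simp
qed

lemma pd_local:
  assumes "open S" "x \<in> S" "\<And>y. y \<in> S \<Longrightarrow> f y = F y" "(F has_derivative F') (at x)"
  shows "pd f e x = F' e"
proof -
  have "eventually (\<lambda>y. f y = F y) (nhds x)"
    using assms(1,2,3) eventually_nhds by blast
  then have "pd f e x = pd F e x" by (rule pd_cong_ev)
  also have "\<dots> = F' e" by (rule pd_has_derivative[OF assms(4)])
  finally show ?thesis .
qed

lemma sum_delta_Basis:
  fixes a :: "'a::euclidean_space"
  assumes "a \<in> Basis"
  shows "(\<Sum>k\<in>Basis. (k \<bullet> a) * F k) = F a"
proof -
  have "(\<Sum>k\<in>Basis. (k \<bullet> a) * F k) = (\<Sum>k\<in>Basis. if k = a then F k else 0)"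
    by (rule sum.cong) (auto simp: inner_Basis assms)
  also have "\<dots> = F a" using assms by simp
  finally show ?thesis .
qed



lemma hasd_inv_sq:
  fixes y :: "real \<times> 'b::euclidean_space"
  assumes "fst y \<noteq> 0"
  shows "((\<lambda>y. c / (fst y)^2) has_derivative (\<lambda>h. - 2 * c * fst h / (fst y)^3)) (at y)"
  using assms
  apply (auto intro!: derivative_eq_intros ext)
  apply (simp add: field_simps power2_eq_square power3_eq_cube power4_eq_xxxx)
  done

lemma hasd_inv:
  fixes y :: "real \<times> 'b::euclidean_space"
  assumes "fst y \<noteq> 0"
  shows "((\<lambda>y. c / fst y) has_derivative (\<lambda>h. - c * fst h / (fst y)^2)) (at y)"
  using assms
  apply (auto intro!: derivative_eq_intros ext)
  apply (simp add: field_simps power2_eq_square)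
  done

lemma pd_hyp_g:
  fixes y :: "real \<times> 'b::euclidean_space"
  assumes "fst y \<noteq> 0"
  shows "pd (\<lambda>y. hyp_g l y m j) i y = - 2 * l^2 * fst i * (m \<bullet> j) / (fst y)^3"
proof -
  have "((\<lambda>y. (l^2 * (m \<bullet> j)) / (fst y)^2) has_derivative (\<lambda>h. - 2 * (l^2 * (m \<bullet> j)) * fst h / (fst y)^3)) (at y)"
    by (rule hasd_inv_sq[OF assms])
  then have "pd (\<lambda>y. (l^2 * (m \<bullet> j)) / (fst y)^2) i y = - 2 * (l^2 * (m \<bullet> j)) * fst i / (fst y)^3"
    by (rule pd_has_derivative)
  moreover have "(\<lambda>y. hyp_g l y m j) = (\<lambda>y. (l^2 * (m \<bullet> j)) / (fst y)^2)"
    by (auto simp: hyp_g_def)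
  ultimately show ?thesis by simp
qed

lemma fst_inner_e0: "fst (k::real \<times> 'b::euclidean_space) = k \<bullet> (1, 0)"
  by (cases k) (simp add: inner_prod_def)

lemma e0_Basis: "((1::real), 0::'b::euclidean_space) \<in> Basis"
  by (simp add: Basis_prod_def)

definition cg :: "real \<times> 'b::euclidean_space \<Rightarrow> real \<times> 'b \<Rightarrow> real \<times> 'b \<Rightarrow> real" where
  "cg k i j = fst i * (k \<bullet> j) + fst j * (k \<bullet> i) - fst k * (i \<bullet> j)"

lemma chris_hyp:
  fixes y :: "real \<times> 'b::euclidean_space"
  assumes "fst y \<noteq> 0" "l \<noteq> 0" "k \<in> Basis"
  shows "christoffel (hyp_g l) (hyp_gi l) k i j y = - cg k i j / fst y"
proof -
  have "christoffel (hyp_g l) (hyp_gi l) k i j y =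
     (1/2) * (\<Sum>m\<in>Basis. (m \<bullet> k) * ((fst y)^2 / l^2 *
        (- 2 * l^2 * fst i * (m \<bullet> j) / (fst y)^3 + - 2 * l^2 * fst j * (m \<bullet> i) / (fst y)^3
          - - 2 * l^2 * fst m * (i \<bullet> j) / (fst y)^3)))"
    unfolding christoffel_def pd_hyp_g[OF assms(1)]
    by (intro arg_cong[where f="\<lambda>t. (1/2) * t"] sum.cong) (auto simp: hyp_gi_def inner_commute)
  also have "\<dots> = (1/2) * ((fst y)^2 / l^2 *
        (- 2 * l^2 * fst i * (k \<bullet> j) / (fst y)^3 + - 2 * l^2 * fst j * (k \<bullet> i) / (fst y)^3
          - - 2 * l^2 * fst k * (i \<bullet> j) / (fst y)^3))"
    by (subst sum_delta_Basis[OF assms(3)]) simp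
  also have "\<dots> = - cg k i j / fst y"
    using assms by (simp add: cg_def field_simps power2_eq_square power3_eq_cube)
  finally show ?thesis .
qed



lemma sum_fst_Basis:
  "(\<Sum>k\<in>(Basis::(real \<times> 'b::euclidean_space) set). fst k * F k) = F (1, 0)"
proof -
  have "(\<Sum>k\<in>(Basis::(real \<times> 'b::euclidean_space) set). fst k * F k) = (\<Sum>k\<in>Basis. (k \<bullet> (1,0)) * F k)"
    by (rule sum.cong) (auto simp: fst_inner_e0[symmetric])
  also have "\<dots> = F (1,0)" by (rule sum_delta_Basis[OF e0_Basis])
  finally show ?thesis .
qed

lemma sum_cg_step:
  fixes k j :: "real \<times> 'b::euclidean_space"
  assumes "k \<in> Basis" "j \<in> Basis"
  shows "(\<Sum>p\<in>Basis. cg k j p * G p) = fst j * G k + (k \<bullet> j) * G (1,0) - fst k * G j"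
proof -
  have "(\<Sum>p\<in>Basis. cg k j p * G p) = (\<Sum>p\<in>Basis. (p \<bullet> k) * (fst j * G p))
      + (\<Sum>p\<in>Basis. fst p * ((k \<bullet> j) * G p)) - (\<Sum>p\<in>Basis. (p \<bullet> j) * (fst k * G p))"
    unfolding sum.distrib[symmetric] sum_subtractf[symmetric]
    by (rule sum.cong) (auto simp: cg_def algebra_simps inner_commute)
  also have "\<dots> = fst j * G k + (k \<bullet> j) * G (1,0) - fst k * G j"
    by (simp only: sum_delta_Basis[OF assms(1)] sum_delta_Basis[OF assms(2)] sum_fst_Basis)
  finally show ?thesis .
qed

lemma cg_kik:
  fixes k i :: "real \<times> 'b::euclidean_space"
  assumes "k \<in> Basis"
  shows "cg k i k = fst i"
  using assms by (simp add: cg_def inner_Basis inner_commute)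

lemma cg_kkp:
  fixes k p :: "real \<times> 'b::euclidean_space"
  assumes "k \<in> Basis"
  shows "cg k k p = fst p"
  using assms by (simp add: cg_def inner_Basis inner_commute)

lemma cg_e0:
  fixes i j :: "real \<times> 'b::euclidean_space"
  shows "cg (1,0) i j = 2 * fst i * fst j - i \<bullet> j"
  by (simp add: cg_def inner_Pair_0 inner_commute[of "(1,0)"])

lemma cg_jie0:
  fixes i j :: "real \<times> 'b::euclidean_space"
  shows "cg j i (1,0) = j \<bullet> i"
  by (simp add: cg_def inner_Pair_0 inner_commute)

lemma card_Basis_prod: "card (Basis :: (real \<times> 'b::euclidean_space) set) = DIM('b) + 1"
  by simp

lemma ricci_hyp:
  fixes x :: "real \<times> 'b::euclidean_space"
  assumes "fst x > 0" "l \<noteq> 0" "i \<in> Basis" "j \<in> Basis"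
  shows "ricci (hyp_g l) (hyp_gi l) i j x = - real DIM('b) * (i \<bullet> j) / (fst x)^2"
proof -
  define N where "N = real DIM('b) + 1"
  define z where "z = fst x"
  have z0: "z > 0" using assms z_def by simp
  have pdc: "pd (\<lambda>y. christoffel (hyp_g l) (hyp_gi l) k a c y) e x = cg k a c * fst e / z^2"
    if "k \<in> Basis" for k a c e
  proof -
    have hd: "((\<lambda>y. (- cg k a c) / fst y) has_derivative (\<lambda>h. - (- cg k a c) * fst h / (fst x)^2)) (at x)"
      by (rule hasd_inv) (use assms in simp)
    have "pd (\<lambda>y. christoffel (hyp_g l) (hyp_gi l) k a c y) e x = - (- cg k a c) * fst e / (fst x)^2"
      by (rule pd_local[where S="{y. fst y > 0}", OF _ _ _ hd]) (use assms that in \<open>auto intro!: open_Collect_less continuous_intros simp: chris_hyp\<close>)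
    then show ?thesis by (simp add: z_def)
  qed
  have chx: "christoffel (hyp_g l) (hyp_gi l) k a c x = - cg k a c / z" if "k \<in> Basis" for k a c
    using chris_hyp[of x l k a c] assms that z_def by simp
  have "ricci (hyp_g l) (hyp_gi l) i j x =
     (\<Sum>k\<in>Basis. fst k * cg k i j / z^2 - cg k i k * fst j / z^2)
     + (\<Sum>k\<in>Basis. \<Sum>p\<in>Basis. cg k k p * cg p i j / z^2 - cg k j p * cg p i k / z^2)"
    unfolding ricci_def
    by (intro arg_cong2[where f="(+)"] sum.cong refl) (auto simp: pdc chx mult.commute power2_eq_square simp del: split_paired_all)
  also have "\<dots> = ((\<Sum>k\<in>Basis. fst k * cg k i j) - (\<Sum>k\<in>Basis. cg k i k) * fst j
     + (\<Sum>k\<in>Basis. \<Sum>p\<in>Basis. cg k k p * cg p i j) - (\<Sum>k\<in>Basis. \<Sum>p\<in>Basis. cg k j p * cg p i k)) / z^2"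
    by (simp add: sum_subtractf sum_divide_distrib sum_distrib_right diff_divide_distrib add_divide_distrib)
  also have "(\<Sum>k\<in>Basis. fst k * cg k i j) = cg (1,0) i j" by (rule sum_fst_Basis)
  also have "(\<Sum>k\<in>Basis. cg k i k) = (\<Sum>k\<in>(Basis::(real \<times> 'b) set). fst i)"
    by (rule sum.cong) (simp_all add: cg_kik)
  also have "\<dots> = N * fst i" by (simp add: N_def)
  also have "(\<Sum>k\<in>Basis. \<Sum>p\<in>Basis. cg k k p * cg p i j) = (\<Sum>k\<in>(Basis::(real \<times> 'b) set). \<Sum>p\<in>Basis. fst p * cg p i j)"
    by (rule sum.cong[OF refl], rule sum.cong[OF refl]) (simp add: cg_kkp)
  also have "\<dots> = N * cg (1,0) i j"
    by (simp add: sum_fst_Basis N_def)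
  also have "(\<Sum>k\<in>Basis. \<Sum>p\<in>Basis. cg k j p * cg p i k) =
       (\<Sum>k\<in>Basis. fst j * cg k i k + (k \<bullet> j) * cg (1,0) i k - fst k * cg j i k)"
    by (rule sum.cong[OF refl]) (rule sum_cg_step[OF _ assms(4)])
  also have "\<dots> = (\<Sum>k\<in>(Basis::(real \<times> 'b) set). fst j * fst i) + (\<Sum>k\<in>Basis. (k \<bullet> j) * cg (1,0) i k) - (\<Sum>k\<in>Basis. fst k * cg j i k)"
    by (simp add: sum.distrib sum_subtractf cg_kik)
  also have "\<dots> = N * fst j * fst i + cg (1,0) i j - cg j i (1,0)"
    by (simp only: sum_delta_Basis[OF assms(4)] sum_fst_Basis) (simp add: N_def)
  finally show ?thesis
    unfolding cg_e0 cg_jie0 N_def z_def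
    by (simp add: field_simps inner_commute)
qed



lemma scalar_hyp:
  fixes x :: "real \<times> 'b::euclidean_space"
  assumes "fst x > 0" "l \<noteq> 0"
  shows "scalar_curv (hyp_g l) (hyp_gi l) x = - real DIM('b) * (real DIM('b) + 1) / l^2"
proof -
  have "scalar_curv (hyp_g l) (hyp_gi l) x =
     (\<Sum>i\<in>(Basis::(real \<times> 'b) set). \<Sum>j\<in>Basis. (j \<bullet> i) * ((fst x)^2 / l^2 * (- real DIM('b) * (i \<bullet> j) / (fst x)^2)))"
    unfolding scalar_curv_def
    by (intro sum.cong refl) (simp add: ricci_hyp assms hyp_gi_def inner_commute)
  also have "\<dots> = (\<Sum>i\<in>(Basis::(real \<times> 'b) set). (fst x)^2 / l^2 * (- real DIM('b) / (fst x)^2))"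
    by (intro sum.cong refl) (subst sum_delta_Basis, simp_all add: inner_Basis)
  also have "\<dots> = - real DIM('b) * (real DIM('b) + 1) / l^2"
    using assms by (simp add: field_simps)
  finally show ?thesis .
qed

definition Qf :: "real \<Rightarrow> 'b::euclidean_space \<Rightarrow> real \<times> 'b \<Rightarrow> real" where
  "Qf A0 z0 y = A0 + (snd y - z0) \<bullet> (snd y - z0)"

definition uu :: "real \<Rightarrow> real \<Rightarrow> real \<Rightarrow> 'b::euclidean_space \<Rightarrow> real \<times> 'b \<Rightarrow> real" where
  "uu K a A0 z0 y = (fst y + 2 * a + Qf A0 z0 y / fst y) / K"

definition du :: "real \<Rightarrow> real \<Rightarrow> 'b::euclidean_space \<Rightarrow> real \<times> 'b \<Rightarrow> real \<times> 'b \<Rightarrow> real" where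
  "du K A0 z0 y e = (fst e * (1 - Qf A0 z0 y / (fst y)^2) + 2 * ((snd y - z0) \<bullet> snd e) / fst y) / K"

definition d2u :: "real \<Rightarrow> real \<Rightarrow> 'b::euclidean_space \<Rightarrow> real \<times> 'b \<Rightarrow> real \<times> 'b \<Rightarrow> real \<times> 'b \<Rightarrow> real" where
  "d2u K A0 z0 y i j = (fst j * (2 * Qf A0 z0 y * fst i / (fst y)^3 - 2 * ((snd y - z0) \<bullet> snd i) / (fst y)^2)
       + 2 * (snd i \<bullet> snd j) / fst y - 2 * ((snd y - z0) \<bullet> snd j) * fst i / (fst y)^2) / K"

lemma hasd_Qf: "(Qf A0 z0 has_derivative (\<lambda>h. 2 * ((snd y - z0) \<bullet> snd h))) (at y)"
  unfolding Qf_def[abs_def]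
  by (auto intro!: derivative_eq_intros ext simp: inner_commute)

lemma hasd_uu:
  assumes "K \<noteq> 0" "fst y \<noteq> 0"
  shows "(uu K a A0 z0 has_derivative du K A0 z0 y) (at y)"
  unfolding uu_def[abs_def] du_def[abs_def] using assms
  apply (auto intro!: derivative_eq_intros ext hasd_Qf)
  apply (simp add: field_simps power2_eq_square)
  done

lemma hasd_du:
  assumes "K \<noteq> 0" "fst y \<noteq> 0"
  shows "((\<lambda>y. du K A0 z0 y j) has_derivative (\<lambda>h. d2u K A0 z0 y h j)) (at y)"
  unfolding d2u_def du_def using assms
  apply (auto intro!: derivative_eq_intros ext hasd_Qf)
  apply (simp add: field_simps eval_nat_numeral inner_commute)
  done



lemma hasd_rpow:
  fixes F :: "'a::real_normed_vector \<Rightarrow> real"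
  assumes "(F has_derivative F') (at y)" "F y > 0"
  shows "((\<lambda>y. F y powr r) has_derivative (\<lambda>h. r * F y powr (r - 1) * F' h)) (at y)"
proof -
  have eq: "(\<lambda>t. t * (r * F y powr (r - 1))) = (*) (r * F y powr (r - 1))" by (auto simp: mult.commute)
  have "((\<lambda>z. z powr r) has_derivative (\<lambda>t. t * (r * F y powr (r - 1)))) (at (F y))"
    using has_real_derivative_powr[OF assms(2), of r] unfolding eq by (simp add: has_field_derivative_def)
  from has_derivative_compose[OF assms(1) this] show ?thesis
    by (simp add: mult.commute mult.left_commute)
qed

lemma sum_cg_ij:
  fixes i j :: "real \<times> 'b::euclidean_space"
  assumes "i \<in> Basis" "j \<in> Basis"
  shows "(\<Sum>k\<in>Basis. cg k i j * G k) = fst i * G j + fst j * G i - (i \<bullet> j) * G (1,0)"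
proof -
  have "(\<Sum>k\<in>Basis. cg k i j * G k) = (\<Sum>k\<in>Basis. (k \<bullet> j) * (fst i * G k))
      + (\<Sum>k\<in>Basis. (k \<bullet> i) * (fst j * G k)) - (\<Sum>k\<in>Basis. fst k * ((i \<bullet> j) * G k))"
    unfolding sum.distrib[symmetric] sum_subtractf[symmetric]
    by (rule sum.cong) (auto simp: cg_def algebra_simps)
  also have "\<dots> = fst i * G j + fst j * G i - (i \<bullet> j) * G (1,0)"
    by (simp only: sum_delta_Basis[OF assms(1)] sum_delta_Basis[OF assms(2)] sum_fst_Basis)
  finally show ?thesis .
qed

lemma hess_hyp:
  fixes x :: "real \<times> 'b::euclidean_space"
  assumes S: "open S" "x \<in> S" "\<And>y. y \<in> S \<Longrightarrow> fst y > 0" and l: "l \<noteq> 0"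
    and ij: "i \<in> Basis" "j \<in> Basis"
    and D1: "\<And>y k. y \<in> S \<Longrightarrow> pd F k y = D1 y k"
    and D2: "((\<lambda>y. D1 y j) has_derivative D2) (at x)"
  shows "hess (hyp_g l) (hyp_gi l) F i j x
     = D2 i + (fst i * D1 x j + fst j * D1 x i - (i \<bullet> j) * D1 x (1,0)) / fst x"
proof -
  have fx: "fst x \<noteq> 0" using S(3)[OF S(2)] by simp
  have "pd (\<lambda>y. pd F j y) i x = D2 i"
    by (rule pd_local[OF S(1,2) _ D2]) (simp add: D1)
  moreover have "(\<Sum>k\<in>Basis. christoffel (hyp_g l) (hyp_gi l) k i j x * pd F k x)
      = - (\<Sum>k\<in>Basis. cg k i j * D1 x k) / fst x"
    unfolding sum_negf[symmetric] sum_divide_distrib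
    by (rule sum.cong[OF refl]) (simp add: chris_hyp[OF fx l] D1[OF S(2)])
  ultimately show ?thesis
    unfolding hess_def sum_cg_ij[OF ij] using fx by (simp add: field_simps)
qed

lemma box_hyp:
  fixes x :: "real \<times> 'b::euclidean_space"
  shows "box (hyp_g l) (hyp_gi l) F x = (fst x)^2 / l^2 * (\<Sum>i\<in>Basis. hess (hyp_g l) (hyp_gi l) F i i x)"
  unfolding box_def sum_distrib_left
proof (rule sum.cong[OF refl])
  fix i :: "real \<times> 'b" assume i: "i \<in> Basis"
  have "(\<Sum>j\<in>Basis. hyp_gi l x i j * hess (hyp_g l) (hyp_gi l) F i j x)
     = (\<Sum>j\<in>Basis. (j \<bullet> i) * ((fst x)^2 / l^2 * hess (hyp_g l) (hyp_gi l) F i j x))"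
    by (rule sum.cong[OF refl]) (simp add: hyp_gi_def inner_commute)
  also have "\<dots> = (fst x)^2 / l^2 * hess (hyp_g l) (hyp_gi l) F i i x"
    by (rule sum_delta_Basis[OF i])
  finally show "(\<Sum>j\<in>Basis. hyp_gi l x i j * hess (hyp_g l) (hyp_gi l) F i j x) =
     (fst x)^2 / l^2 * hess (hyp_g l) (hyp_gi l) F i i x" .
qed

definition hh :: "real \<Rightarrow> real \<Rightarrow> 'b::euclidean_space \<Rightarrow> real \<times> 'b \<Rightarrow> real" where
  "hh K A0 z0 y = (fst y + Qf A0 z0 y / fst y) / (K * (fst y)^2)"

lemma hess_uu_identity:
  assumes "K \<noteq> 0" "fst y \<noteq> 0"
  shows "d2u K A0 z0 y i j + (fst i * du K A0 z0 y j + fst j * du K A0 z0 y i - (i \<bullet> j) * du K A0 z0 y (1,0)) / fst y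
     = (i \<bullet> j) * hh K A0 z0 y"
  using assms
  by (simp add: d2u_def du_def hh_def inner_prod_def field_simps eval_nat_numeral)



lemma sum_du_sq:
  fixes y :: "real \<times> 'b::euclidean_space"
  shows "(\<Sum>i\<in>Basis. (du K A0 z0 y i)^2) =
    ((1 - Qf A0 z0 y / (fst y)^2)^2 + 4 * ((snd y - z0) \<bullet> (snd y - z0)) / (fst y)^2) / K^2"
proof -
  define al where "al = 1 - Qf A0 z0 y / (fst y)^2"
  define be where "be = 2 / fst y"
  define w where "w = snd y - z0"
  have wi: "w \<bullet> snd i = (0, w) \<bullet> i" for i :: "real \<times> 'b" by (cases i) (simp add: inner_prod_def)
  have du_eq: "du K A0 z0 y i = (fst i * al + be * (w \<bullet> snd i)) / K" for i
    by (simp add: du_def al_def be_def w_def)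
  have sq: "(du K A0 z0 y i)^2 = (al^2 * (fst i * fst i) + 2 * al * be * (fst i * (w \<bullet> snd i))
      + be^2 * (((0,w) \<bullet> i) * ((0,w) \<bullet> i))) / K^2" for i
    unfolding du_eq wi[symmetric] power_divide by (simp add: power2_eq_square algebra_simps)
  have "(\<Sum>i\<in>(Basis::(real \<times> 'b) set). (du K A0 z0 y i)^2) =
     (al^2 * (\<Sum>i\<in>(Basis::(real \<times> 'b) set). fst i * fst i) + 2 * al * be * (\<Sum>i\<in>(Basis::(real \<times> 'b) set). fst i * (w \<bullet> snd i))
      + be^2 * (\<Sum>i\<in>(Basis::(real \<times> 'b) set). ((0,w) \<bullet> i) * ((0,w) \<bullet> i))) / K^2"
    unfolding sq sum_distrib_left sum_divide_distrib[symmetric] sum.distrib by simp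
  also have "(\<Sum>i\<in>(Basis::(real \<times> 'b) set). fst i * fst i) = 1"
    by (simp add: sum_fst_Basis)
  also have "(\<Sum>i\<in>(Basis::(real \<times> 'b) set). fst i * (w \<bullet> snd i)) = 0"
    by (simp add: sum_fst_Basis)
  also have "(\<Sum>i\<in>(Basis::(real \<times> 'b) set). ((0,w) \<bullet> i) * ((0,w) \<bullet> i)) = w \<bullet> w"
    by (simp add: euclidean_inner[symmetric])
  finally show ?thesis
    by (simp add: al_def be_def w_def power2_eq_square field_simps)
qed



definition KK :: "real \<Rightarrow> real \<Rightarrow> real \<Rightarrow> real \<Rightarrow> real" where
  "KK d l lam b = (d - 1) / (l * sqrt \<bar>lam\<bar>) * b"

definition AA :: "real \<Rightarrow> real \<Rightarrow> real \<Rightarrow> real" where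
  "AA lam a b = a^2 - sgn lam * b^2"

definition Den :: "real \<Rightarrow> real \<Rightarrow> real \<Rightarrow> 'b::euclidean_space \<Rightarrow> real \<times> 'b \<Rightarrow> real" where
  "Den lam a b z0 y = (fst y)^2 + 2 * a * fst y + Qf (AA lam a b) z0 y"

lemma phi_rhs_eq:
  "phi_rhs d l lam a b z0 y = KK d l lam b * fst y / Den lam a b z0 y"
proof -
  have "- sgn lam * b^2 + (fst y + a)^2 + (norm (snd y - z0))^2 = Den lam a b z0 y"
    unfolding Den_def Qf_def AA_def power2_norm_eq_inner by (simp add: power2_eq_square algebra_simps)
  then show ?thesis unfolding phi_rhs_def KK_def by simp
qed

lemma uu_eq:
  assumes "fst y \<noteq> 0"
  shows "uu K a (AA lam a b) z0 y = Den lam a b z0 y / (K * fst y)"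
  using assms unfolding uu_def Den_def by (simp add: field_simps power2_eq_square)

lemma dom_eq:
  assumes "KK d l lam b > 0"
  shows "sol_domain d l lam a b z0 = {y. fst y > 0 \<and> Den lam a b z0 y > 0}"
  unfolding sol_domain_def phi_rhs_eq using assms
  by (auto simp: zero_less_divide_iff zero_less_mult_iff mult_less_0_iff)

lemma open_dom:
  assumes "KK d l lam b > 0"
  shows "open (sol_domain d l lam a b z0)"
  unfolding dom_eq[OF assms] Den_def Qf_def
  by (intro open_Collect_conj open_Collect_less continuous_intros)

lemma dom_props:
  assumes "KK d l lam b > 0" "y \<in> sol_domain d l lam a b z0"
  shows "fst y > 0" "uu (KK d l lam b) a (AA lam a b) z0 y > 0"
    "phi_rhs d l lam a b z0 y = 1 / uu (KK d l lam b) a (AA lam a b) z0 y"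
  using assms unfolding dom_eq[OF assms(1)]
  by (auto simp: uu_eq phi_rhs_eq)

lemma conf_phi_eq:
  assumes "KK d l lam b > 0" "y \<in> sol_domain d l lam a b z0"
  shows "conf_phi d l lam a b z0 y = uu (KK d l lam b) a (AA lam a b) z0 y powr (- ((d - 1) / 2))"
  unfolding conf_phi_def dom_props(3)[OF assms]
  using dom_props(2)[OF assms] by (simp add: powr_divide powr_minus_divide)



lemma hess_F_local:
  fixes x :: "real \<times> 'b::euclidean_space"
  assumes K: "KK d l lam b > 0" and l: "l \<noteq> 0" and x: "x \<in> sol_domain d l lam a b z0"
    and ij: "i \<in> Basis" "j \<in> Basis"
    and FS: "\<And>y. y \<in> sol_domain d l lam a b z0 \<Longrightarrow> F y = uu (KK d l lam b) a (AA lam a b) z0 y"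
  shows "hess (hyp_g l) (hyp_gi l) F i j x = (i \<bullet> j) * hh (KK d l lam b) (AA lam a b) z0 x"
proof -
  let ?S = "sol_domain d l lam a b z0"
  let ?K = "KK d l lam b" and ?A = "AA lam a b"
  have fpos: "\<And>y. y \<in> ?S \<Longrightarrow> fst y > 0" by (rule dom_props(1)[OF K])
  have Kne: "?K \<noteq> 0" using K by simp
  have D1: "pd F k y = du ?K ?A z0 y k" if "y \<in> ?S" for y k
    by (rule pd_local[OF open_dom[OF K] that FS hasd_uu[OF Kne]]) (use fpos[OF that] in auto)
  have "hess (hyp_g l) (hyp_gi l) F i j x = d2u ?K ?A z0 x i j
     + (fst i * du ?K ?A z0 x j + fst j * du ?K ?A z0 x i - (i \<bullet> j) * du ?K ?A z0 x (1,0)) / fst x"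
    by (rule hess_hyp[OF open_dom[OF K] x fpos l ij D1 hasd_du[OF Kne]]) (use fpos[OF x] in auto)
  also have "\<dots> = (i \<bullet> j) * hh ?K ?A z0 x"
    by (rule hess_uu_identity) (use K dom_props(1)[OF K x] in auto)
  finally show ?thesis .
qed

lemma box_F_local:
  fixes x :: "real \<times> 'b::euclidean_space"
  assumes K: "KK d l lam b > 0" and l: "l \<noteq> 0" and x: "x \<in> sol_domain d l lam a b z0"
    and FS: "\<And>y. y \<in> sol_domain d l lam a b z0 \<Longrightarrow> F y = uu (KK d l lam b) a (AA lam a b) z0 y"
  shows "box (hyp_g l) (hyp_gi l) F x = (fst x)^2 / l^2 * ((real DIM('b) + 1) * hh (KK d l lam b) (AA lam a b) z0 x)"
proof -
  have "(\<Sum>i\<in>(Basis::(real \<times> 'b) set). hess (hyp_g l) (hyp_gi l) F i i x)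
      = (\<Sum>i\<in>(Basis::(real \<times> 'b) set). hh (KK d l lam b) (AA lam a b) z0 x)"
    by (rule sum.cong[OF refl]) (simp add: hess_F_local[OF K l x _ _ FS] inner_Basis)
  then show ?thesis unfolding box_hyp by simp
qed

lemma stress_zero:
  fixes z0 :: "'b::euclidean_space"
  defines "d \<equiv> real DIM('b)"
  assumes K: "KK d l lam b > 0" and l: "l \<noteq> 0" and d1: "d > 1" and x: "x \<in> sol_domain d l lam a b z0"
    and ij: "i \<in> Basis" "j \<in> Basis"
  shows "stressT (hyp_g l) (hyp_gi l) d \<kappa> (conf_phi d l lam a b z0) i j x = 0"
proof -
  let ?F = "\<lambda>y. conf_phi d l lam a b z0 y powr (-2 / (d - 1))"
  have FS: "?F y = uu (KK d l lam b) a (AA lam a b) z0 y" if "y \<in> sol_domain d l lam a b z0" for y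
  proof -
    have "?F y = uu (KK d l lam b) a (AA lam a b) z0 y powr (- ((d - 1) / 2) * (-2 / (d - 1)))"
      unfolding conf_phi_eq[OF K that] by (simp add: powr_powr)
    also have "- ((d - 1) / 2) * (-2 / (d - 1)) = 1" using d1 by (simp add: field_simps)
    finally show ?thesis using dom_props(2)[OF K that] by simp
  qed
  have fx: "fst x > 0" using dom_props(1)[OF K x] .
  have h1: "hess (hyp_g l) (hyp_gi l) ?F i j x = (i \<bullet> j) * hh (KK d l lam b) (AA lam a b) z0 x"
    by (rule hess_F_local[OF K l x ij FS])
  have h2: "box (hyp_g l) (hyp_gi l) ?F x = (fst x)^2 / l^2 * ((real DIM('b) + 1) * hh (KK d l lam b) (AA lam a b) z0 x)"
    by (rule box_F_local[OF K l x FS])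
  have br: "(i \<bullet> j) * hh (KK d l lam b) (AA lam a b) z0 x - 1 / (d + 1) * hyp_g l x i j *
     ((fst x)^2 / l^2 * ((real DIM('b) + 1) * hh (KK d l lam b) (AA lam a b) z0 x)) = 0"
  proof -
    have g: "hyp_g l x i j * ((fst x)^2 / l^2 * X) = (i \<bullet> j) * X" for X
      using fx l by (simp add: hyp_g_def field_simps)
    have "d + 1 \<noteq> 0" using d1 by simp
    then show ?thesis unfolding mult.assoc g by (simp add: d_def field_simps)
  qed
  show ?thesis
    unfolding stressT_def h1 h2 br by simp
qed



lemma core_alg:
  fixes z a ww s b K :: real
  assumes "z > 0" "K \<noteq> 0"
  defines "Q \<equiv> a^2 - s * b^2 + ww"
  shows "z^2 * (((1 - Q / z^2)^2 + 4 * ww / z^2) / K^2)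
     - 2 * z^2 * ((z + 2 * a + Q / z) / K) * ((z + Q / z) / (K * z^2))
     + ((z + 2 * a + Q / z) / K)^2 = 4 * s * b^2 / K^2"
  using assms unfolding Q_def
  by (simp add: field_simps power2_eq_square)

lemma final_alg: "l > 0 \<Longrightarrow> (d::real) - 1 \<noteq> 0 \<Longrightarrow> (d^2 - 1) / (4 * l^2) * (4 * lam * l^2 / (d - 1)^2) = (d + 1) / (d - 1) * lam"
proof -
  assume l: "l > 0" and dm: "d - 1 \<noteq> 0"
  define e where "e = d - 1"
  have d: "d = e + 1" unfolding e_def by simp
  have e: "e \<noteq> 0" using dm e_def by simp
  show ?thesis unfolding d using l e by (simp add: field_simps power2_eq_square)
qed

lemma hess_alg:
  fixes z :: real
  assumes "X + (fi * g + fi * g - 1 * g0) / z = H"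
  shows "- p * (U1 * X + (- p - 1) * U2 * g * g) + (fi * (- p * (U1 * g)) + fi * (- p * (U1 * g)) - 1 * (- p * (U1 * g0))) / z
    = - p * U1 * H + p * (p + 1) * U2 * g^2"
proof -
  have X: "X = H - (fi * g + fi * g - 1 * g0) / z" using assms by simp
  show ?thesis unfolding X by (simp add: algebra_simps power2_eq_square diff_divide_distrib add_divide_distrib)
qed

lemma scalar_eq:
  fixes z0 :: "'b::euclidean_space"
  defines "d \<equiv> real DIM('b)"
  assumes d1: "d > 1" and l: "l > 0" and lam: "lam \<noteq> 0" and b: "b > 0"
    and x: "x \<in> sol_domain d l lam a b z0"
  shows "box (hyp_g l) (hyp_gi l) (conf_phi d l lam a b z0) x
        - (d - 1) / (4 * d) * scalar_curv (hyp_g l) (hyp_gi l) x * conf_phi d l lam a b z0 x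
        - (d + 1) / (d - 1) * lam * conf_phi d l lam a b z0 x powr ((d + 3) / (d - 1)) = 0"
proof -
  define K where "K = KK d l lam b"
  define A where "A = AA lam a b"
  define p where "p = (d - 1) / 2"
  let ?S = "sol_domain d l lam a b z0"
  have q: "sqrt \<bar>lam\<bar> > 0" using lam by simp
  have K: "K > 0" unfolding K_def KK_def using d1 l b q by simp
  have Kne: "K \<noteq> 0" using K by simp
  have KK: "KK d l lam b > 0" using K K_def by simp
  have fpos: "\<And>y. y \<in> ?S \<Longrightarrow> fst y > 0" by (rule dom_props(1)[OF KK])
  have upos: "\<And>y. y \<in> ?S \<Longrightarrow> uu K a A z0 y > 0" unfolding K_def A_def by (rule dom_props(2)[OF KK])
  have PhiS: "conf_phi d l lam a b z0 y = uu K a A z0 y powr (- p)" if "y \<in> ?S" for y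
    unfolding conf_phi_eq[OF KK that] K_def A_def p_def by simp
  define D1 where "D1 = (\<lambda>y k. - p * (uu K a A z0 y powr (- p - 1) * du K A z0 y k))"
  have D1pd: "pd (conf_phi d l lam a b z0) k y = D1 y k" if y: "y \<in> ?S" for y k
  proof -
    have hd: "((\<lambda>y. uu K a A z0 y powr (- p)) has_derivative
        (\<lambda>h. - p * uu K a A z0 y powr (- p - 1) * du K A z0 y h)) (at y)"
      by (rule hasd_rpow[OF hasd_uu[OF Kne] upos[OF y]]) (use fpos[OF y] in simp)
    show ?thesis
      by (rule pd_local[OF open_dom[OF KK] y PhiS hd, THEN trans]) (simp_all add: D1_def)
  qed
  define U where "U = uu K a A z0 x"
  define U1 where "U1 = U powr (- p - 1)"
  define U2 where "U2 = U powr (- p - 1 - 1)"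
  have fx: "fst x > 0" using fpos[OF x] .
  have U: "U > 0" unfolding U_def using upos[OF x] .
  have hD2: "((\<lambda>y. D1 y j) has_derivative
     (\<lambda>h. - p * (U1 * d2u K A z0 x h j + (- p - 1) * U2 * du K A z0 x h * du K A z0 x j))) (at x)" for j
  proof -
    have "((\<lambda>y. - p * (uu K a A z0 y powr (- p - 1) * du K A z0 y j)) has_derivative
     (\<lambda>h. - p * (uu K a A z0 x powr (- p - 1) * d2u K A z0 x h j
        + (- p - 1) * uu K a A z0 x powr (- p - 1 - 1) * du K A z0 x h * du K A z0 x j))) (at x)"
      by (rule has_derivative_mult_right[OF has_derivative_mult[OF hasd_rpow[OF hasd_uu[OF Kne] upos[OF x]] hasd_du[OF Kne]]])
         (use fx in simp_all)
    then show ?thesis unfolding D1_def U1_def U2_def U_def .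
  qed
  have hii: "hess (hyp_g l) (hyp_gi l) (conf_phi d l lam a b z0) i i x
      = - p * U1 * hh K A z0 x + p * (p + 1) * U2 * (du K A z0 x i)^2" if i: "i \<in> Basis" for i
  proof -
    have "hess (hyp_g l) (hyp_gi l) (conf_phi d l lam a b z0) i i x
      = - p * (U1 * d2u K A z0 x i i + (- p - 1) * U2 * du K A z0 x i * du K A z0 x i)
        + (fst i * D1 x i + fst i * D1 x i - (i \<bullet> i) * D1 x (1,0)) / fst x"
      by (rule hess_hyp[OF open_dom[OF KK] x fpos _ i i D1pd hD2]) (use l in simp_all)
    also have "\<dots> = - p * U1 * hh K A z0 x + p * (p + 1) * U2 * (du K A z0 x i)^2"
      unfolding D1_def U1_def[symmetric] U_def[symmetric] inner_Basis[OF i i] if_P[OF refl]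
      by (rule hess_alg) (use hess_uu_identity[OF Kne, of x A z0 i i] fx i in \<open>simp add: inner_Basis\<close>)
    finally show ?thesis .
  qed
  have boxv: "box (hyp_g l) (hyp_gi l) (conf_phi d l lam a b z0) x
     = (fst x)^2 / l^2 * (- p * U1 * hh K A z0 x * (d + 1) + p * (p + 1) * U2 * (\<Sum>i\<in>(Basis::(real \<times> 'b) set). (du K A z0 x i)^2))"
  proof -
    have "(\<Sum>i\<in>(Basis::(real \<times> 'b) set). hess (hyp_g l) (hyp_gi l) (conf_phi d l lam a b z0) i i x)
       = (\<Sum>i\<in>(Basis::(real \<times> 'b) set). - p * U1 * hh K A z0 x + p * (p + 1) * U2 * (du K A z0 x i)^2)"
      by (rule sum.cong[OF refl]) (rule hii)
    also have "\<dots> = - p * U1 * hh K A z0 x * (d + 1) + p * (p + 1) * U2 * (\<Sum>i\<in>(Basis::(real \<times> 'b) set). (du K A z0 x i)^2)"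
      by (simp only: sum.distrib sum_distrib_left[symmetric]) (simp add: d_def algebra_simps)
    finally show ?thesis unfolding box_hyp by simp
  qed
  have R: "scalar_curv (hyp_g l) (hyp_gi l) x = - d * (d + 1) / l^2"
    unfolding d_def using scalar_hyp[OF fx] l by simp
  have Phix: "conf_phi d l lam a b z0 x = U2 * U * U"
  proof -
    have "U powr (- p) = U powr ((- p - 1 - 1) + 1 + 1)" by (rule arg_cong[where f="\<lambda>e. U powr e"]) simp
    also have "\<dots> = U2 * U * U" unfolding powr_add U2_def using U by simp
    finally show ?thesis unfolding PhiS[OF x] U_def .
  qed
  have Phip: "conf_phi d l lam a b z0 x powr ((d + 3) / (d - 1)) = U2"
  proof -
    have "conf_phi d l lam a b z0 x powr ((d + 3) / (d - 1)) = U powr (- p * ((d + 3) / (d - 1)))"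
      unfolding PhiS[OF x] U_def powr_powr ..
    also have "- p * ((d + 3) / (d - 1)) = - p - 1 - 1" unfolding p_def using d1 by (simp add: field_simps)
    finally show ?thesis unfolding U2_def .
  qed
  have U1e: "U1 = U2 * U"
  proof -
    have "U powr (- p - 1) = U powr ((- p - 1 - 1) + 1)" by (rule arg_cong[where f="\<lambda>e. U powr e"]) simp
    then show ?thesis unfolding U1_def U2_def powr_add using U by simp
  qed
  define G where "G = (\<Sum>i\<in>(Basis::(real \<times> 'b) set). (du K A z0 x i)^2)"
  define H where "H = hh K A z0 x"
  define z where "z = fst x"
  define ww where "ww = (snd x - z0) \<bullet> (snd x - z0)"
  define s where "s = sgn lam"
  have Qe: "Qf A z0 x = a^2 - s * b^2 + ww" unfolding Qf_def A_def AA_def ww_def s_def by simp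
  have E: "z^2 * G - 2 * z^2 * U * H + U^2 = 4 * s * b^2 / K^2"
    unfolding G_def sum_du_sq H_def hh_def U_def uu_def Qe z_def[symmetric] ww_def[symmetric]
    by (rule core_alg) (use fx Kne z_def in simp_all)
  have lhs: "box (hyp_g l) (hyp_gi l) (conf_phi d l lam a b z0) x
        - (d - 1) / (4 * d) * scalar_curv (hyp_g l) (hyp_gi l) x * conf_phi d l lam a b z0 x
        - (d + 1) / (d - 1) * lam * conf_phi d l lam a b z0 x powr ((d + 3) / (d - 1))
      = U2 * ((d^2 - 1) / (4 * l^2) * (z^2 * G - 2 * z^2 * U * H + U^2) - (d + 1) / (d - 1) * lam)"
    unfolding Phip unfolding boxv R Phix U1e G_def[symmetric] H_def[symmetric] z_def[symmetric] p_def
    using d1 l by (simp add: field_simps power2_eq_square)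
  have K2: "K^2 = (d - 1)^2 * b^2 / (l^2 * \<bar>lam\<bar>)"
    unfolding K_def KK_def using q by (simp add: power_divide power_mult_distrib)
  have slam: "s * \<bar>lam\<bar> = lam" unfolding s_def by (simp add: sgn_mult_abs)
  have "(d^2 - 1) / (4 * l^2) * (4 * s * b^2 / K^2) - (d + 1) / (d - 1) * lam = 0"
  proof -
    have dm: "d - 1 \<noteq> 0" using d1 by simp
    have "4 * s * b^2 / ((d - 1)^2 * b^2 / (l^2 * \<bar>lam\<bar>)) = 4 * (s * \<bar>lam\<bar>) * l^2 / (d - 1)^2"
      using b l dm by (simp add: field_simps)
    moreover have "(d^2 - 1) / (4 * l^2) * (4 * lam * l^2 / (d - 1)^2) = (d + 1) / (d - 1) * lam"
      using l dm by (rule final_alg)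
    ultimately show ?thesis unfolding K2 slam by simp
  qed
  then show ?thesis unfolding lhs E by simp
qed



lemma asym_core:
  fixes K D a l d :: real
  assumes K: "K > 0" and D: "D > 0" and l: "l > 0"
  defines "p \<equiv> (d - 1) / 2"
  shows "(\<lambda>r. (K * exp (- r / l) / ((exp (- r / l))^2 + 2 * a * exp (- r / l) + D)) powr p
      - (exp (- (d - 1) * r / (2 * l)) * (K / D) powr p
         + exp (- (d + 1) * r / (2 * l)) * (- (2 * p) * a / D * (K / D) powr p)))
     \<in> o[at_top](\<lambda>r. exp (- (d + 1) * r / (2 * l)))"
proof -
  define g where "g = (\<lambda>z::real. (z^2 + 2 * a * z + D) powr (- p))"
  define g' where "g' = - p * D powr (- p - 1) * (2 * a)"
  have dg: "(g has_real_derivative g') (at 0)"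
  proof -
    have "((\<lambda>z::real. z^2 + 2 * a * z + D) has_real_derivative 2 * a) (at 0)"
      by (auto intro!: derivative_eq_intros)
    from DERIV_chain2[OF has_real_derivative_powr[of "0^2 + 2 * a * 0 + D" "- p"] this]
    show ?thesis using D unfolding g_def g'_def by simp
  qed
  have lim1: "((\<lambda>h. (g h - g 0 - g' * h) / h) \<longlongrightarrow> 0) (at 0)"
  proof -
    have "((\<lambda>h. (g (0 + h) - g 0) / h - g') \<longlongrightarrow> g' - g') (at 0)"
      by (intro tendsto_diff DERIV_D[OF dg] tendsto_const)
    then have "((\<lambda>h. (g (0 + h) - g 0) / h - g') \<longlongrightarrow> 0) (at 0)" by simp
    moreover have "eventually (\<lambda>h. (g (0 + h) - g 0) / h - g' = (g h - g 0 - g' * h) / h) (at (0::real))"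
      by (auto simp: eventually_at_filter field_simps)
    ultimately show ?thesis by (rule Lim_transform_eventually)
  qed
  define z where "z = (\<lambda>r::real. exp (- r / l))"
  have zlim: "filterlim z (at 0) at_top"
    unfolding z_def using l by real_asymp
  have lim2: "((\<lambda>r. (g (z r) - g 0 - g' * z r) / z r) \<longlongrightarrow> 0) at_top"
    by (rule filterlim_compose[OF lim1 zlim])
  have lim3: "((\<lambda>r. K powr p * ((g (z r) - g 0 - g' * z r) / z r)) \<longlongrightarrow> K powr p * 0) at_top"
    by (intro tendsto_mult tendsto_const lim2)
  have lim3': "((\<lambda>r. K powr p * ((g (z r) - g 0 - g' * z r) / z r)) \<longlongrightarrow> 0) at_top"
    using lim3 by simp
  have z0lim: "(z \<longlongrightarrow> 0) at_top" unfolding z_def using l by real_asymp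
  have denlim: "((\<lambda>r. (z r)^2 + 2 * a * z r + D) \<longlongrightarrow> 0^2 + 2 * a * 0 + D) at_top"
    by (intro tendsto_intros z0lim)
  have evden: "eventually (\<lambda>r. (z r)^2 + 2 * a * z r + D > 0) at_top"
    using order_tendstoD(1)[OF denlim] D by simp
  have zpos: "z r > 0" for r unfolding z_def by simp
  have e1: "exp (- (d - 1) * r / (2 * l)) = z r powr p" for r
    unfolding z_def p_def powr_def using l by (simp add: field_simps)
  have e2: "exp (- (d + 1) * r / (2 * l)) = z r powr p * z r" for r
    unfolding z_def p_def powr_def using l by (simp add: field_simps flip: exp_add)
  have zr: "exp (- r / l) = z r" for r by (simp add: z_def)
  have Dp: "D powr (- p - 1) = D powr (- p) / D"
    using D by (simp add: powr_diff powr_minus_divide)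
  have ratio: "eventually (\<lambda>r. ((K * exp (- r / l) / ((exp (- r / l))^2 + 2 * a * exp (- r / l) + D)) powr p
      - (exp (- (d - 1) * r / (2 * l)) * (K / D) powr p
         + exp (- (d + 1) * r / (2 * l)) * (- (2 * p) * a / D * (K / D) powr p)))
      / exp (- (d + 1) * r / (2 * l)) = K powr p * ((g (z r) - g 0 - g' * z r) / z r)) at_top"
    using evden
  proof eventually_elim
    case (elim r)
    have "(K * exp (- r / l) / ((exp (- r / l))^2 + 2 * a * exp (- r / l) + D)) powr p
        = K powr p * z r powr p * g (z r)"
      unfolding g_def zr using elim K zpos[of r]
      by (simp add: powr_divide powr_mult powr_minus_divide)
    moreover have "(K / D) powr p = K powr p * g 0" unfolding g_def using K D
      by (simp add: powr_divide powr_minus_divide)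
    moreover have "- (2 * p) * a / D * (K / D) powr p = K powr p * g'"
      unfolding g'_def Dp using K D by (simp add: powr_divide powr_minus_divide field_simps)
    ultimately show ?case unfolding e1 e2 zr using zpos[of r] K
      by (simp add: field_simps)
  qed
  have "((\<lambda>r. ((K * exp (- r / l) / ((exp (- r / l))^2 + 2 * a * exp (- r / l) + D)) powr p
      - (exp (- (d - 1) * r / (2 * l)) * (K / D) powr p
         + exp (- (d + 1) * r / (2 * l)) * (- (2 * p) * a / D * (K / D) powr p)))
      / exp (- (d + 1) * r / (2 * l))) \<longlongrightarrow> 0) at_top"
    apply (rule Lim_transform_eventually[OF lim3'])
    apply (rule eventually_mono[OF ratio])
    apply (rule sym, assumption)
    done
  then show ?thesis by (rule smalloI_tendsto) simp
qed



lemma exq: "(d::real) \<noteq> 1 \<Longrightarrow> (d - 1) / 2 * ((d + 1) / (d - 1)) = (d - 1) / 2 + 1"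
proof -
  assume d: "d \<noteq> 1"
  define e where "e = d - 1"
  have dd: "d = e + 1" unfolding e_def by simp
  have e: "e \<noteq> 0" using d e_def by simp
  show ?thesis unfolding dd using e by (simp add: field_simps)
qed

lemma coefq: "(d::real) > 1 \<Longrightarrow> - al * (d - 1) / (2 * d) * (2 * d / (d - 1) * X) = - al * X"
proof -
  assume d: "d > 1"
  have 1: "(d - 1) / (2 * d) * (2 * d / (d - 1)) = 1" using d by simp
  have "- al * (d - 1) / (2 * d) * (2 * d / (d - 1) * X) = - al * X * ((d - 1) / (2 * d) * (2 * d / (d - 1)))"
    by (simp only: times_divide_eq_right times_divide_eq_left mult_ac divide_divide_eq_left)
  then show ?thesis unfolding 1 by simp
qed

theorem mainTheorem12:
  fixes l lam a b :: real and z0 :: "real ^ 'n"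
  defines "d \<equiv> real CARD('n)"
  assumes "CARD('n) \<ge> 2" and "l > 0" and "lam \<noteq> 0" and "b > 0"
  shows
   "(\<forall>x \<in> sol_domain d l lam a b z0. \<forall>i \<in> Basis. \<forall>j \<in> Basis.
        (\<forall>\<kappa>. stressT (hyp_g l) (hyp_gi l) d \<kappa> (conf_phi d l lam a b z0) i j x = 0)
      \<and> ricci (hyp_g l) (hyp_gi l) i j x + d / l^2 * hyp_g l x i j = 0)
  \<and> (\<forall>x \<in> sol_domain d l lam a b z0.
        box (hyp_g l) (hyp_gi l) (conf_phi d l lam a b z0) x
        - (d - 1) / (4 * d) * scalar_curv (hyp_g l) (hyp_gi l) x * conf_phi d l lam a b z0 x
        - (d + 1) / (d - 1) * lam * conf_phi d l lam a b z0 x powr ((d + 3) / (d - 1)) = 0)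
  \<and> (\<forall>zv :: real ^ 'n. - sgn lam * b^2 + a^2 + (norm (zv - z0))^2 > 0 \<longrightarrow>
       (let \<alpha> = sqrt \<bar>lam\<bar> * a / b;
            pm = phi_minus d l lam a b z0 zv;
            pp = - l * \<alpha> * pm powr ((d + 1) / (d - 1));
            pihat = - (1 / l) * pp;
            f = (\<lambda>p::real. - \<alpha> * (d - 1) / (2 * d) * p powr (2 * d / (d - 1)))
        in (\<lambda>r. conf_phi d l lam a b z0 (exp (- r / l), zv)
                 - (exp (- (d - 1) * r / (2 * l)) * pm
                    + exp (- (d + 1) * r / (2 * l)) * pp))
             \<in> o[at_top](\<lambda>r. exp (- (d + 1) * r / (2 * l)))
           \<and> pihat = \<alpha> * pm powr ((d + 1) / (d - 1))
           \<and> - pihat - deriv f pm = 0))"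
proof -
  have dD: "d = real DIM(real ^ 'n)" unfolding d_def by simp
  have d1: "d > 1" using assms(2) unfolding d_def by simp
  have q: "sqrt \<bar>lam\<bar> > 0" using assms(4) by simp
  define K where "K = KK d l lam b"
  have K: "K > 0" unfolding K_def KK_def using d1 assms(3,5) q by simp
  have KK: "KK d l lam b > 0" using K K_def by simp
  have P1: "\<forall>x \<in> sol_domain d l lam a b z0. \<forall>i \<in> Basis. \<forall>j \<in> Basis.
        (\<forall>\<kappa>. stressT (hyp_g l) (hyp_gi l) d \<kappa> (conf_phi d l lam a b z0) i j x = 0)
      \<and> ricci (hyp_g l) (hyp_gi l) i j x + d / l^2 * hyp_g l x i j = 0"
  proof (intro ballI allI conjI)
    fix x :: "real \<times> (real ^ 'n)" and i j :: "real \<times> (real ^ 'n)" and \<kappa> :: real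
    assume x: "x \<in> sol_domain d l lam a b z0" and i: "i \<in> Basis" and j: "j \<in> Basis"
    show "stressT (hyp_g l) (hyp_gi l) d \<kappa> (conf_phi d l lam a b z0) i j x = 0"
      using stress_zero[where 'b="real ^ 'n" and l=l and lam=lam and b=b and a=a] KK assms(3) d1 x i j
      unfolding dD by simp
  next
    fix x :: "real \<times> (real ^ 'n)" and i j :: "real \<times> (real ^ 'n)"
    assume x: "x \<in> sol_domain d l lam a b z0" and i: "i \<in> Basis" and j: "j \<in> Basis"
    have fx: "fst x > 0" using dom_props(1)[OF KK x] .
    show "ricci (hyp_g l) (hyp_gi l) i j x + d / l^2 * hyp_g l x i j = 0"
      using ricci_hyp[OF fx _ i j, of l] assms(3) fx unfolding hyp_g_def d_def
      by (simp add: field_simps)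
  qed
  have P2: "\<forall>x \<in> sol_domain d l lam a b z0.
        box (hyp_g l) (hyp_gi l) (conf_phi d l lam a b z0) x
        - (d - 1) / (4 * d) * scalar_curv (hyp_g l) (hyp_gi l) x * conf_phi d l lam a b z0 x
        - (d + 1) / (d - 1) * lam * conf_phi d l lam a b z0 x powr ((d + 3) / (d - 1)) = 0"
  proof
    fix x assume x: "x \<in> sol_domain d l lam a b z0"
    note th = scalar_eq[where 'b="real ^ 'n" and l=l and lam=lam and b=b and a=a]
    show "box (hyp_g l) (hyp_gi l) (conf_phi d l lam a b z0) x
        - (d - 1) / (4 * d) * scalar_curv (hyp_g l) (hyp_gi l) x * conf_phi d l lam a b z0 x
        - (d + 1) / (d - 1) * lam * conf_phi d l lam a b z0 x powr ((d + 3) / (d - 1)) = 0"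
      using th d1 assms(3,4,5) x unfolding dD by simp
  qed
  have P3: "\<forall>zv :: real ^ 'n. - sgn lam * b^2 + a^2 + (norm (zv - z0))^2 > 0 \<longrightarrow>
       (let \<alpha> = sqrt \<bar>lam\<bar> * a / b;
            pm = phi_minus d l lam a b z0 zv;
            pp = - l * \<alpha> * pm powr ((d + 1) / (d - 1));
            pihat = - (1 / l) * pp;
            f = (\<lambda>p::real. - \<alpha> * (d - 1) / (2 * d) * p powr (2 * d / (d - 1)))
        in (\<lambda>r. conf_phi d l lam a b z0 (exp (- r / l), zv)
                 - (exp (- (d - 1) * r / (2 * l)) * pm
                    + exp (- (d + 1) * r / (2 * l)) * pp))
             \<in> o[at_top](\<lambda>r. exp (- (d + 1) * r / (2 * l)))
           \<and> pihat = \<alpha> * pm powr ((d + 1) / (d - 1))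
           \<and> - pihat - deriv f pm = 0)"
  proof (intro allI impI)
    fix zv :: "real ^ 'n"
    define D where "D = - sgn lam * b^2 + a^2 + (norm (zv - z0))^2"
    assume "- sgn lam * b^2 + a^2 + (norm (zv - z0))^2 > 0"
    then have D: "D > 0" unfolding D_def .
    define p where "p = (d - 1) / 2"
    define \<alpha> where "\<alpha> = sqrt \<bar>lam\<bar> * a / b"
    define pm where "pm = phi_minus d l lam a b z0 zv"
    define pp where "pp = - l * \<alpha> * pm powr ((d + 1) / (d - 1))"
    define pihat where "pihat = - (1 / l) * pp"
    define f where "f = (\<lambda>p::real. - \<alpha> * (d - 1) / (2 * d) * p powr (2 * d / (d - 1)))"
    have pm: "pm = (K / D) powr p"
      unfolding pm_def phi_minus_def K_def KK_def D_def p_def by simp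
    have KD: "K / D > 0" using K D by simp
    have pmpos: "pm > 0" unfolding pm using KD K D by simp
    have pmpow: "pm powr ((d + 1) / (d - 1)) = (K / D) powr p * (K / D)"
    proof -
      have "pm powr ((d + 1) / (d - 1)) = (K / D) powr (p + 1)"
        unfolding pm powr_powr p_def using d1 exq[of d] by simp
      then show ?thesis using KD K D by (simp add: powr_add)
    qed
    have pp: "pp = - (2 * p) * a / D * (K / D) powr p"
    proof -
      have gen: "- l * \<alpha> * (X * (K / D)) = - (2 * p) * a / D * X" for X
        unfolding \<alpha>_def K_def KK_def p_def using q assms(3,5) d1 D by (simp add: field_simps)
      show ?thesis unfolding pp_def pmpow by (rule gen)
    qed
    have cphi: "conf_phi d l lam a b z0 (exp (- r / l), zv)
        = (K * exp (- r / l) / ((exp (- r / l))^2 + 2 * a * exp (- r / l) + D)) powr p" for r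
    proof -
      have "Den lam a b z0 (exp (- r / l), zv) = (exp (- r / l))^2 + 2 * a * exp (- r / l) + D"
        unfolding Den_def Qf_def AA_def D_def by (simp add: power2_norm_eq_inner algebra_simps)
      then show ?thesis unfolding conf_phi_def phi_rhs_eq K_def p_def by simp
    qed
    have A1: "(\<lambda>r. conf_phi d l lam a b z0 (exp (- r / l), zv)
                 - (exp (- (d - 1) * r / (2 * l)) * pm
                    + exp (- (d + 1) * r / (2 * l)) * pp))
             \<in> o[at_top](\<lambda>r. exp (- (d + 1) * r / (2 * l)))"
      unfolding cphi pm pp p_def by (rule asym_core[OF K D assms(3)])
    have A2: "pihat = \<alpha> * pm powr ((d + 1) / (d - 1))"
      unfolding pihat_def pp_def using assms(3) by simp
    have A3: "- pihat - deriv f pm = 0"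
    proof -
      have "(f has_real_derivative - \<alpha> * (d - 1) / (2 * d) * (2 * d / (d - 1) * pm powr (2 * d / (d - 1) - 1))) (at pm)"
        unfolding f_def by (intro DERIV_cmult has_real_derivative_powr pmpos)
      then have "deriv f pm = - \<alpha> * (d - 1) / (2 * d) * (2 * d / (d - 1) * pm powr (2 * d / (d - 1) - 1))"
        by (rule DERIV_imp_deriv)
      also have "2 * d / (d - 1) - 1 = (d + 1) / (d - 1)" using d1 by (simp add: field_simps)
      finally have "deriv f pm = - \<alpha> * pm powr ((d + 1) / (d - 1))" using coefq[OF d1] by simp
      then show ?thesis unfolding A2 by simp
    qed
    show "let \<alpha> = sqrt \<bar>lam\<bar> * a / b;
            pm = phi_minus d l lam a b z0 zv;
            pp = - l * \<alpha> * pm powr ((d + 1) / (d - 1));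
            pihat = - (1 / l) * pp;
            f = (\<lambda>p::real. - \<alpha> * (d - 1) / (2 * d) * p powr (2 * d / (d - 1)))
        in (\<lambda>r. conf_phi d l lam a b z0 (exp (- r / l), zv)
                 - (exp (- (d - 1) * r / (2 * l)) * pm
                    + exp (- (d + 1) * r / (2 * l)) * pp))
             \<in> o[at_top](\<lambda>r. exp (- (d + 1) * r / (2 * l)))
           \<and> pihat = \<alpha> * pm powr ((d + 1) / (d - 1))
           \<and> - pihat - deriv f pm = 0"
      unfolding Let_def using A1 A2 A3 unfolding \<alpha>_def pm_def pp_def pihat_def f_def by blast
  qed
  show ?thesis using P1 P2 P3 by blast
qed

end
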